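(* There exist constants $\beta\in(0,1)$, $C>0$ and $c>0$ such that for every $m>0$, every odd $n\ge5$, every $\epsilon\in(0,1)$ with $n\epsilon\ge C$, and every $\epsilon$-differentially private mechanism $\mathcal{M}:V^n\to V$, there is some $D\in\mathcal{CTM}$ with $$\mathrm{FAIR}(D,\mathcal{M}(D))\ge c\,\frac{m}{n\epsilon}\ln\frac1\beta$$ with probability at least $\beta$.
   Context: $V=[-m/2,m/2]$. A dataset is $D=(x_1,\dots,x_n)\in V^n$ (a multiset), indexed so that $x_1\le\dots\le x_n$, with median (optimal location) $\mathcal{T}(D)=x_{\lceil n/2\rceil}$. $\mathrm{FAIR}(D,\ell)=\max_{1\le i\le n}\left(|x_i-\ell|-|x_i-\mathcal{T}(D)|\right)$. $\mathcal{CTM}$ is the set of datasets with $|x_{i+1}-x_i|\ge|x_{j+1}-x_j|$ for all $1\le i<j\le\lceil n/2\rceil-1$ and $|x_i-x_{i-1}|\ge|x_j-x_{j-1}|$ for all $\lceil n/2\rceil+1\le j<i\le n$. Two datasets are neighboring if, as multisets, they differ in exactly one element; $\mathcal{M}$ is $\epsilon$-differentially private if $\Pr[\mathcal{M}(D)\in S]\le e^{\epsilon}\Pr[\mathcal{M}(D')\in S]$ for all neighboring $D,D'$ and measurable $S\subseteq V$. *)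

theory Defs
  imports "HOL-Probability.Probability" "HOL-Library.Multiset"
begin

definition Vdom :: "real \<Rightarrow> real set" where
  "Vdom m = {-m/2 .. m/2}"

definition datasets :: "real \<Rightarrow> nat \<Rightarrow> real multiset set" where
  "datasets m n = {D. size D = n \<and> set_mset D \<subseteq> Vdom m}"

definition xel :: "real multiset \<Rightarrow> nat \<Rightarrow> real" where
  "xel D i = sorted_list_of_multiset D ! (i - 1)"

text \<open>Median index ceil(n/2) and the median T(D).\<close>
definition midx :: "nat \<Rightarrow> nat" where
  "midx n = (n + 1) div 2"

definition Tmed :: "real multiset \<Rightarrow> real" where
  "Tmed D = xel D (midx (size D))"

definition FAIR :: "real multiset \<Rightarrow> real \<Rightarrow> real" where
  "FAIR D l = Max ((\<lambda>i. \<bar>xel D i - l\<bar> - \<bar>xel D i - Tmed D\<bar>) ` {1..size D})"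

definition CTM :: "real multiset set" where
  "CTM = {D. (\<forall>i j. 1 \<le> i \<and> i < j \<and> j \<le> midx (size D) - 1 \<longrightarrow>
                 \<bar>xel D (i+1) - xel D i\<bar> \<ge> \<bar>xel D (j+1) - xel D j\<bar>)
           \<and> (\<forall>i j. midx (size D) + 1 \<le> j \<and> j < i \<and> i \<le> size D \<longrightarrow>
                 \<bar>xel D i - xel D (i-1)\<bar> \<ge> \<bar>xel D j - xel D (j-1)\<bar>)}"

definition neighboring :: "real multiset \<Rightarrow> real multiset \<Rightarrow> bool" where
  "neighboring D D' \<longleftrightarrow> size D = size D' \<and> size (D - D') = 1"

definition mechanism :: "real \<Rightarrow> nat \<Rightarrow> (real multiset \<Rightarrow> real measure) \<Rightarrow> bool" where
  "mechanism m n M \<longleftrightarrow> (\<forall>D \<in> datasets m n.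
     prob_space (M D) \<and> sets (M D) = sets borel \<and> measure (M D) (Vdom m) = 1)"

definition differentially_private ::
  "real \<Rightarrow> nat \<Rightarrow> real \<Rightarrow> (real multiset \<Rightarrow> real measure) \<Rightarrow> bool" where
  "differentially_private m n \<epsilon> M \<longleftrightarrow> mechanism m n M \<and>
     (\<forall>D \<in> datasets m n. \<forall>D' \<in> datasets m n. neighboring D D' \<longrightarrow>
        (\<forall>S \<in> sets borel. S \<subseteq> Vdom m \<longrightarrow>
           measure (M D) S \<le> exp \<epsilon> * measure (M D') S))"

end

theory Submission
  imports Defs
begin

definition ap :: "real \<Rightarrow> real \<Rightarrow> nat \<Rightarrow> nat \<Rightarrow> real multiset" where
  "ap a h n j = mset (map (\<lambda>i. a + real i * h) [j..<j+n])"

lemma ap_size[simp]: "size (ap a h n j) = n"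
  by (simp add: ap_def)

lemma ap_sorted: assumes "h \<ge> 0"
  shows "sorted_list_of_multiset (ap a h n j) = map (\<lambda>i. a + real i * h) [j..<j+n]"
proof -
  have "sorted (map (\<lambda>i. a + real i * h) [j..<j+n])"
    unfolding sorted_map using assms
    by (auto intro!: sorted_wrt_mono_rel[OF _ sorted_upt] mult_right_mono)
  then show ?thesis by (simp only: ap_def sorted_list_of_multiset_mset sorted_sort_id)
qed

lemma ap_xel: assumes "h \<ge> 0" "1 \<le> i" "i \<le> n"
  shows "xel (ap a h n j) i = a + real (j + i - 1) * h"
proof -
  have "[j..<j+n] ! (i-1) = j + (i-1)" using assms by simp
  moreover have "j + (i-1) = j + i - 1" using assms by simp
  ultimately show ?thesis using assms by (simp add: xel_def ap_sorted)
qed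

lemma midx_bounds: "1 \<le> n \<Longrightarrow> 1 \<le> midx n \<and> midx n \<le> n"
  unfolding midx_def by presburger

lemma ap_Tmed: assumes "h \<ge> 0" "1 \<le> n"
  shows "Tmed (ap a h n j) = a + real (j + midx n - 1) * h"
  using assms midx_bounds[OF assms(2)] by (simp add: Tmed_def ap_xel)

lemma FAIR_eq: assumes "size D \<ge> 1"
  shows "FAIR D l = \<bar>l - Tmed D\<bar>"
  unfolding FAIR_def
proof (rule Max_eqI)
  show "finite ((\<lambda>i. \<bar>xel D i - l\<bar> - \<bar>xel D i - Tmed D\<bar>) ` {1..size D})" by simp
  show "\<And>y. y \<in> (\<lambda>i. \<bar>xel D i - l\<bar> - \<bar>xel D i - Tmed D\<bar>) ` {1..size D} \<Longrightarrow> y \<le> \<bar>l - Tmed D\<bar>"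
    by auto
  have "midx (size D) \<in> {1..size D}" using midx_bounds[OF assms] by auto
  moreover have "\<bar>l - Tmed D\<bar> = \<bar>xel D (midx (size D)) - l\<bar> - \<bar>xel D (midx (size D)) - Tmed D\<bar>"
    by (simp add: Tmed_def)
  ultimately show "\<bar>l - Tmed D\<bar> \<in> (\<lambda>i. \<bar>xel D i - l\<bar> - \<bar>xel D i - Tmed D\<bar>) ` {1..size D}"
    by blast
qed

lemma ap_CTM: assumes "h \<ge> 0" "1 \<le> n" shows "ap a h n j \<in> CTM"
proof -
  have gap: "xel (ap a h n j) (i+1) - xel (ap a h n j) i = h" if "1 \<le> i" "i + 1 \<le> n" for i
    using that assms by (simp add: ap_xel algebra_simps)
  have "midx n \<le> n" using midx_bounds[OF assms(2)] by simp
  show ?thesis unfolding CTM_def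
  proof (intro CollectI conjI allI impI)
    fix i j' assume H: "1 \<le> i \<and> i < j' \<and> j' \<le> midx (size (ap a h n j)) - 1"
    then show "\<bar>xel (ap a h n j) (i+1) - xel (ap a h n j) i\<bar> \<ge> \<bar>xel (ap a h n j) (j'+1) - xel (ap a h n j) j'\<bar>"
    proof -
      have "Suc j' \<le> n" "Suc i \<le> n" using H \<open>midx n \<le> n\<close> by auto
      then show ?thesis using H gap[of i] gap[of j'] by simp
    qed
  next
    fix i j' assume H: "midx (size (ap a h n j)) + 1 \<le> j' \<and> j' < i \<and> i \<le> size (ap a h n j)"
    then show "\<bar>xel (ap a h n j) i - xel (ap a h n j) (i-1)\<bar> \<ge> \<bar>xel (ap a h n j) j' - xel (ap a h n j) (j'-1)\<bar>"
    proof -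
      have "1 \<le> i-1" "1 \<le> j'-1" "i-1+1 = i" "j'-1+1 = j'" "i \<le> n" "j' \<le> n"
        using H midx_bounds[OF assms(2)] by auto
      then show ?thesis using gap[of "i-1"] gap[of "j'-1"] by simp
    qed
  qed
qed

lemma ap_neighboring: assumes "h > 0" "1 \<le> n"
  shows "neighboring (ap a h n j) (ap a h n (Suc j))"
proof -
  define Q where "Q = mset (map (\<lambda>i. a + real i * h) [Suc j..<j+n])"
  have e1: "ap a h n j = add_mset (a + real j * h) Q"
    using assms(2) unfolding ap_def Q_def by (simp add: upt_rec)
  have e2: "ap a h n (Suc j) = add_mset (a + real (j+n) * h) Q"
    using assms(2) unfolding ap_def Q_def
    by (cases n) (auto simp: add_mset_commute)
  have ne: "a + real j * h \<noteq> a + real (j+n) * h" using assms by simp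
  have "ap a h n j - ap a h n (Suc j) = {#a + real j * h#}"
    unfolding e1 e2 using ne by (simp add: diff_union_single_conv)
  then show ?thesis unfolding neighboring_def by simp
qed

lemma ap_datasets: assumes "m > 0" "1 \<le> n" "k \<le> n" "j \<le> k"
  shows "ap (-m/2) (m/(2*n)) n j \<in> datasets m n"
proof -
  have "x \<in> Vdom m" if "x \<in> set_mset (ap (-m/2) (m/(2*n)) n j)" for x
  proof -
    have "x \<in> (\<lambda>i. -m/2 + real i * (m/(2*n))) ` {j..<j+n}"
      using that by (simp only: ap_def set_mset_mset set_map set_upt)
    then obtain i where i0: "i \<in> {j..<j+n}" and i: "x = -m/2 + real i * (m/(2*n))"
      by blast
    have "i < j + n" using i0 by simp
    then have "real i \<le> 2 * real n" using assms by linarith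
    then have "real i * (m / (2 * real n)) \<le> 2 * real n * (m / (2 * real n))"
      using assms by (intro mult_right_mono) auto
    also have "\<dots> = m" using assms by simp
    finally have "real i * (m / (2 * real n)) \<le> m" .
    moreover have "0 \<le> real i * (m / (2 * real n))" using assms by simp
    ultimately have "-m/2 \<le> -m/2 + real i * (m/(2*n)) \<and> -m/2 + real i * (m/(2*n)) \<le> m/2"
      by linarith
    then show ?thesis unfolding Vdom_def i by (simp only: atLeastAtMost_iff)
  qed
  then show ?thesis unfolding datasets_def by auto
qed


lemma pfm: "prob_space N \<Longrightarrow> finite_measure N"
  by (rule prob_space.axioms(1))

theorem theorem7p21:
  shows "\<exists>\<beta>::real. \<exists>C::real. \<exists>c::real. 0 < \<beta> \<and> \<beta> < 1 \<and> C > 0 \<and> c > 0 \<and>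
    (\<forall>(m::real) (n::nat) (\<epsilon>::real) M.
       m > 0 \<longrightarrow> odd n \<longrightarrow> n \<ge> 5 \<longrightarrow> 0 < \<epsilon> \<longrightarrow> \<epsilon> < 1 \<longrightarrow> real n * \<epsilon> \<ge> C \<longrightarrow>
       differentially_private m n \<epsilon> M \<longrightarrow>
       (\<exists>D \<in> datasets m n \<inter> CTM.
          measure (M D) {l \<in> space (M D).
             FAIR D l \<ge> c * (m / (real n * \<epsilon>)) * ln (1 / \<beta>)} \<ge> \<beta>))"
proof (rule exI[of _ "1/4"], rule exI[of _ 1], rule exI[of _ "1/16"], intro conjI allI impI)
  fix m :: real and n :: nat and \<epsilon> :: real and M
  assume m: "m > 0" and "odd n" and n5: "n \<ge> 5" and e0: "0 < \<epsilon>" and e1: "\<epsilon> < 1"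
    and ne: "real n * \<epsilon> \<ge> 1" and dp: "differentially_private m n \<epsilon> M"
  define t where "t = 1/16 * (m / (real n * \<epsilon>)) * ln (1 / (1/4::real))"
  define h where "h = m / (2 * real n)"
  define a where "a = - m / 2"
  define k where "k = nat \<lfloor>1/\<epsilon>\<rfloor>"
  have n1: "1 \<le> n" using n5 by simp
  have hpos: "h > 0" unfolding h_def using m n1 by simp
  have ie1: "1/\<epsilon> \<ge> 1" using e0 e1 by simp
  have fl0: "0 \<le> \<lfloor>1/\<epsilon>\<rfloor>" using e0 by simp
  have kreal: "real k = of_int \<lfloor>1/\<epsilon>\<rfloor>" unfolding k_def using fl0 by simp
  have kle: "real k \<le> 1/\<epsilon>" unfolding kreal by simp
  have kgt: "real k > 1/\<epsilon> - 1" unfolding kreal by linarith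
  have fl1: "(1::int) \<le> \<lfloor>1/\<epsilon>\<rfloor>" using ie1 by (metis floor_mono floor_one)
  have kge1: "real k \<ge> 1" unfolding kreal using fl1 by simp
  have k2: "2 * real k \<ge> 1/\<epsilon>" using kgt kge1 by linarith
  have "1/\<epsilon> \<le> real n" using ne e0 by (simp add: field_simps mult.commute)
  then have ken: "real k \<le> real n" using kle by linarith
  hence kn: "k \<le> n" by simp
  have keps: "real k * \<epsilon> \<le> 1" using kle e0 by (simp add: field_simps)
  have mech: "prob_space (M D) \<and> sets (M D) = sets borel \<and> measure (M D) (Vdom m) = 1"
    if "D \<in> datasets m n" for D
    using dp that unfolding differentially_private_def mechanism_def by blast
  have DS: "ap a h n j \<in> datasets m n" if "j \<le> k" for j
    unfolding a_def h_def using ap_datasets[OF m n1 kn that] by simp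
  have CT: "ap a h n j \<in> CTM" for j using ap_CTM[OF _ n1] hpos by simp
  have chain: "measure (M (ap a h n 0)) S \<le> exp (real j * \<epsilon>) * measure (M (ap a h n j)) S"
    if "j \<le> k" "S \<in> sets borel" "S \<subseteq> Vdom m" for j S
    using that(1)
  proof (induction j)
    case 0 then show ?case by simp
  next
    case (Suc j)
    have "measure (M (ap a h n j)) S \<le> exp \<epsilon> * measure (M (ap a h n (Suc j))) S"
      using dp DS[of j] DS[of "Suc j"] Suc.prems ap_neighboring[OF hpos n1, of a j] that(2,3)
      unfolding differentially_private_def by auto
    then have "exp (real j * \<epsilon>) * measure (M (ap a h n j)) S
        \<le> exp (real j * \<epsilon>) * (exp \<epsilon> * measure (M (ap a h n (Suc j))) S)"
      by (intro mult_left_mono) auto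
    also have "\<dots> = exp (real (Suc j) * \<epsilon>) * measure (M (ap a h n (Suc j))) S"
      by (simp add: distrib_right exp_add)
    finally show ?case using Suc by simp
  qed
  show "\<exists>D \<in> datasets m n \<inter> CTM.
          measure (M D) {l \<in> space (M D).
             FAIR D l \<ge> 1/16 * (m / (real n * \<epsilon>)) * ln (1 / (1/4))} \<ge> 1/4"
  proof (rule ccontr)
    assume "\<not> ?thesis"
    then have small: "measure (M D) {l \<in> space (M D). FAIR D l \<ge> t} < 1/4"
      if "D \<in> datasets m n" "D \<in> CTM" for D
      using that unfolding t_def by force
    define D0 where "D0 = ap a h n 0"
    define Dk where "Dk = ap a h n k"
    define T0 where "T0 = Tmed D0"
    define Tk where "Tk = Tmed Dk"
    have TkT0: "Tk - T0 = real k * h"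
    proof -
      have "h + Tmed (ap a h n j) = a + (h * real j + h * real (midx n))" for j
        using ap_Tmed[of h n a j] hpos n1 midx_bounds[OF n1] by (simp add: algebra_simps of_nat_diff)
      from this[of k] this[of 0] show ?thesis
        unfolding Tk_def T0_def D0_def Dk_def by (simp add: algebra_simps)
    qed
    have ln4: "ln (1 / (1/4::real)) \<le> 2"
    proof -
      have "ln (4::real) = ln 2 + ln 2" using ln_mult[of 2 2] by simp
      then have "ln (4::real) < 2" using ln_2_less_1 by linarith
      then show ?thesis by simp
    qed
    have tle: "2 * t \<le> real k * h"
    proof -
      have "2 * t \<le> 2 * (1/16 * (m / (real n * \<epsilon>)) * 2)"
        unfolding t_def using ln4 m e0 n1 by (intro mult_left_mono) (auto intro!: mult_left_mono)
      also have "\<dots> = (1/\<epsilon>) * (m / (4 * real n))" by (simp add: field_simps)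
      also have "\<dots> \<le> (2 * real k) * (m / (4 * real n))"
        using k2 m n1 by (intro mult_right_mono) auto
      also have "\<dots> = real k * h" unfolding h_def by (simp add: field_simps)
      finally show ?thesis .
    qed
    have t0: "t \<ge> 0" unfolding t_def using m e0 by simp
    have spc: "space (M D) = UNIV" if "D \<in> datasets m n" for D
      using mech[OF that] sets_eq_imp_space_eq[of "M D" borel] by simp
    have FD: "{l \<in> space (M D). FAIR D l \<ge> t} = {l. t \<le> \<bar>l - Tmed D\<bar>}" if "D \<in> datasets m n" for D
    proof -
      have "size D = n" using that unfolding datasets_def by simp
      then show ?thesis using spc[OF that] FAIR_eq[of D] n1 by auto
    qed
    have Fmeas: "{l. t \<le> \<bar>l - T\<bar>} \<in> sets borel" for T :: real
      by (rule borel_closed, rule closed_Collect_le) (intro continuous_intros)+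
    define S where "S = ball T0 t \<inter> Vdom m"
    have Smeas: "S \<in> sets borel" unfolding S_def Vdom_def
      by (intro sets.Int borel_open borel_closed open_ball closed_atLeastAtMost)
    have D0ds: "D0 \<in> datasets m n" and Dkds: "Dk \<in> datasets m n"
      unfolding D0_def Dk_def using DS by auto
    have D0c: "D0 \<in> CTM" and Dkc: "Dk \<in> CTM" unfolding D0_def Dk_def using CT by auto
    have fm0: "finite_measure (M D0)" and fmk: "finite_measure (M Dk)"
      using mech[OF D0ds] mech[OF Dkds] pfm by auto
    have "Vdom m \<subseteq> S \<union> {l. t \<le> \<bar>l - T0\<bar>}"
      unfolding S_def by (auto simp: dist_real_def)
    then have "measure (M D0) (Vdom m) \<le> measure (M D0) (S \<union> {l. t \<le> \<bar>l - T0\<bar>})"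
      using fm0 Smeas Fmeas mech[OF D0ds]
      by (intro finite_measure.finite_measure_mono) auto
    also have "\<dots> \<le> measure (M D0) S + measure (M D0) {l. t \<le> \<bar>l - T0\<bar>}"
      using Smeas Fmeas mech[OF D0ds] by (intro measure_Un_le) auto
    finally have a1: "1 \<le> measure (M D0) S + measure (M D0) {l. t \<le> \<bar>l - T0\<bar>}"
      using mech[OF D0ds] by simp
    have a2: "measure (M D0) {l. t \<le> \<bar>l - T0\<bar>} < 1/4"
      using small[OF D0ds D0c] FD[OF D0ds] unfolding T0_def by simp
    have "S \<subseteq> {l. t \<le> \<bar>l - Tk\<bar>}"
      unfolding S_def using TkT0 tle by (auto simp: dist_real_def)
    then have "measure (M Dk) S \<le> measure (M Dk) {l. t \<le> \<bar>l - Tk\<bar>}"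
      using fmk Fmeas mech[OF Dkds]
      by (intro finite_measure.finite_measure_mono) auto
    also have "\<dots> < 1/4"
      using small[OF Dkds Dkc] FD[OF Dkds] unfolding Tk_def by simp
    finally have b: "measure (M Dk) S < 1/4" .
    have "measure (M D0) S \<le> exp (real k * \<epsilon>) * measure (M Dk) S"
      using chain[of k S] Smeas unfolding D0_def Dk_def S_def by auto
    also have "\<dots> \<le> 3 * measure (M Dk) S"
      using keps exp_le by (intro mult_right_mono) (auto intro: order_trans[OF _ exp_le])
    finally show False using a1 a2 b by linarith
  qed
qed (auto)

end
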